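(* For every (nondeterministic B\"uchi) automaton $\mathcal{A}$ over $\Sigma$ there exists a deterministic B\"uchi automaton $\mathcal{D}$ such that $\mathfrak{J}(\mathcal{A})=\mathfrak{J}(\mathcal{D})$.
   Context: An automaton $\langle\Sigma,Q,\delta,Q_0,\alpha\rangle$ accepts an infinite word if some run visits $\alpha$ infinitely often; it is deterministic if $|Q_0|=1$ and $|\delta(q,\sigma)|=1$ for all $q,\sigma$. For $w\in\Sigma^\omega$, $\Psi(w)\in\mathbb{N}_\infty^\Sigma$ gives the number of occurrences of each letter ($\infty$ if infinite); $w\sim w'$ iff $\Psi(w)=\Psi(w')$; $\mathfrak{J}(\mathcal{A})=\{w\in\Sigma^\omega:\exists w'\sim w,\ w'\in\mathfrak{L}(\mathcal{A})\}$. *)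

theory Defs
  imports Main "HOL-Library.Extended_Nat"
begin

datatype ('a, 'q) automaton =
  Automaton (alph: "'a set") (states: "'q set") (trans: "'q \<Rightarrow> 'a \<Rightarrow> 'q set")
            (init: "'q set") (acc: "'q set")

definition well_formed :: "('a, 'q) automaton \<Rightarrow> bool" where
  "well_formed A \<longleftrightarrow> finite (alph A) \<and> finite (states A) \<and> init A \<subseteq> states A
     \<and> acc A \<subseteq> states A
     \<and> (\<forall>q\<in>states A. \<forall>\<sigma>\<in>alph A. trans A q \<sigma> \<subseteq> states A)"

definition deterministic :: "('a, 'q) automaton \<Rightarrow> bool" where
  "deterministic A \<longleftrightarrow> card (init A) = 1
     \<and> (\<forall>q\<in>states A. \<forall>\<sigma>\<in>alph A. card (trans A q \<sigma>) = 1)"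

definition omega_words :: "'a set \<Rightarrow> (nat \<Rightarrow> 'a) set" where
  "omega_words \<Sigma> = {w. range w \<subseteq> \<Sigma>}"

definition is_run :: "('a, 'q) automaton \<Rightarrow> (nat \<Rightarrow> 'a) \<Rightarrow> (nat \<Rightarrow> 'q) \<Rightarrow> bool" where
  "is_run A w r \<longleftrightarrow> r 0 \<in> init A \<and> (\<forall>i. r (Suc i) \<in> trans A (r i) (w i))"

definition accepting :: "('a, 'q) automaton \<Rightarrow> (nat \<Rightarrow> 'q) \<Rightarrow> bool" where
  "accepting A r \<longleftrightarrow> (\<exists>\<^sub>\<infinity> i. r i \<in> acc A)"

definition lang :: "('a, 'q) automaton \<Rightarrow> (nat \<Rightarrow> 'a) set" where
  "lang A = {w \<in> omega_words (alph A). \<exists>r. is_run A w r \<and> accepting A r}"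

definition parikh :: "(nat \<Rightarrow> 'a) \<Rightarrow> 'a \<Rightarrow> enat" where
  "parikh w \<sigma> = (if finite {i. w i = \<sigma>} then enat (card {i. w i = \<sigma>}) else \<infinity>)"

definition jumping_lang :: "('a, 'q) automaton \<Rightarrow> (nat \<Rightarrow> 'a) set" where
  "jumping_lang A = {w \<in> omega_words (alph A). \<exists>w'. parikh w' = parikh w \<and> w' \<in> lang A}"

end

theory Submission
  imports Defs "HOL-Library.Infinite_Set" "HOL-Library.FuncSet"
begin

lemma run_in_states:
  assumes wf: "well_formed D" and w: "w \<in> omega_words (alph D)" and r: "is_run D w r"
  shows "r i \<in> states D"
proof (induction i)
  case 0 then show ?case using wf r by (auto simp: well_formed_def is_run_def)
next
  case (Suc i)
  have "w i \<in> alph D" using w by (auto simp: omega_words_def)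
  then show ?case using wf r Suc unfolding well_formed_def is_run_def by blast
qed

lemma INFM_shift: "(\<exists>\<^sub>\<infinity>i. P (N + i)) \<longleftrightarrow> (\<exists>\<^sub>\<infinity>i::nat. P i)"
proof
  assume "\<exists>\<^sub>\<infinity>i. P (N + i)"
  then show "\<exists>\<^sub>\<infinity>i::nat. P i" unfolding INFM_nat
    by (metis add.commute less_add_same_cancel1 order_le_less_trans le_add2 trans_less_add2)
next
  assume h: "\<exists>\<^sub>\<infinity>i::nat. P i"
  show "\<exists>\<^sub>\<infinity>i. P (N + i)" unfolding INFM_nat
  proof
    fix m
    obtain n where "n > N + m" "P n" using h unfolding INFM_nat by blast
    then show "\<exists>n>m. P (N + n)" by (intro exI[of _ "n - N"]) auto
  qed
qed

fun path :: "('a,'q) automaton \<Rightarrow> 'q \<Rightarrow> 'a list \<Rightarrow> 'q \<Rightarrow> bool" where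
  "path A q [] q' \<longleftrightarrow> q' = q"
| "path A q (a#x) q' \<longleftrightarrow> (\<exists>p\<in>trans A q a. path A p x q')"

lemma path_append: "path A q (x@y) q' \<longleftrightarrow> (\<exists>p. path A q x p \<and> path A p y q')"
  by (induct x arbitrary: q) auto

lemma path_closed: "well_formed A \<Longrightarrow> p \<in> states A \<Longrightarrow> set y \<subseteq> alph A \<Longrightarrow> path A p y q \<Longrightarrow> q \<in> states A"
proof (induct y arbitrary: p)
  case Nil then show ?case by simp
next
  case (Cons a y p)
  from Cons.prems(4) obtain p' where p': "p' \<in> trans A p a" "path A p' y q" by auto
  have "a \<in> alph A" using Cons.prems(3) by simp
  then have "p' \<in> states A" using Cons.prems(1,2) p'(1) unfolding well_formed_def by blast
  then show ?case using Cons.hyps[of p'] Cons.prems p' by auto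
qed

lemma filter_eq_appendD:
  "filter P x = u @ v \<Longrightarrow> \<exists>x1 x2. x = x1 @ x2 \<and> filter P x1 = u \<and> filter P x2 = v"
proof (induct x arbitrary: u)
  case Nil then show ?case by simp
next
  case (Cons a x)
  show ?case
  proof (cases "P a")
    case True
    show ?thesis
    proof (cases u)
      case Nil then show ?thesis using Cons.prems by (intro exI[of _ "[]"] exI[of _ "a # x"]) auto
    next
      case (Cons b u')
      then have "filter P x = u' @ v" "a = b" using Cons.prems True by auto
      then obtain x1 x2 where "x = x1 @ x2 \<and> filter P x1 = u' \<and> filter P x2 = v" using Cons.hyps by blast
      then show ?thesis using True \<open>a = b\<close> \<open>u = b # u'\<close> by (intro exI[of _ "a # x1"] exI[of _ x2]) auto
    qed
  next
    case False
    then have "filter P x = u @ v" using Cons.prems by auto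
    then obtain x1 x2 where "x = x1 @ x2 \<and> filter P x1 = u \<and> filter P x2 = v" using Cons.hyps by blast
    then show ?thesis using False by (intro exI[of _ "a # x1"] exI[of _ x2]) auto
  qed
qed

definition cl :: "('a,'q) automaton \<Rightarrow> 'a set \<Rightarrow> 'q set \<Rightarrow> 'q set" where
  "cl A I S = {q. \<exists>p\<in>S. \<exists>y. set y \<subseteq> I \<and> path A p y q}"

definition dl :: "('a,'q) automaton \<Rightarrow> 'q set \<Rightarrow> 'a \<Rightarrow> 'q set" where
  "dl A S \<sigma> = (\<Union>p\<in>S. trans A p \<sigma>)"

definition Reach :: "('a,'q) automaton \<Rightarrow> 'a set \<Rightarrow> 'a list \<Rightarrow> 'q set" where
  "Reach A I u = {q. \<exists>q0\<in>init A. \<exists>x. filter (\<lambda>a. a \<notin> I) x = u \<and> path A q0 x q}"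

lemma Reach_Nil: "Reach A I [] = cl A I (init A)"
  unfolding Reach_def cl_def by (auto simp: filter_empty_conv)

lemma Reach_snoc:
  assumes "\<sigma> \<notin> I"
  shows "Reach A I (u@[\<sigma>]) = cl A I (dl A (Reach A I u) \<sigma>)"
proof (intro set_eqI iffI)
  fix q assume "q \<in> Reach A I (u@[\<sigma>])"
  then obtain q0 x where q0: "q0 \<in> init A" and fx: "filter (\<lambda>a. a \<notin> I) x = u @ [\<sigma>]" and p: "path A q0 x q"
    unfolding Reach_def by blast
  from fx obtain x1 vs where x: "x = x1 @ vs" and f1: "filter (\<lambda>a. a \<notin> I) x1 = u"
    and f2: "filter (\<lambda>a. a \<notin> I) vs = [\<sigma>]"
    by (auto dest: filter_eq_appendD)
  from f2 obtain us vs' where vs: "vs = us @ \<sigma> # vs'" and us: "\<forall>a\<in>set us. a \<in> I"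
    and vs': "filter (\<lambda>a. a \<notin> I) vs' = []"
    by (auto simp: filter_eq_Cons_iff)
  have vs'I: "set vs' \<subseteq> I" using vs' by (auto simp: filter_empty_conv)
  from p obtain p1 p2 where "path A q0 (x1 @ us) p1" "p2 \<in> trans A p1 \<sigma>" "path A p2 vs' q"
    unfolding x vs by (auto simp: path_append)
  moreover have "filter (\<lambda>a. a \<notin> I) (x1 @ us) = u" using f1 us by (auto simp: filter_empty_conv)
  ultimately show "q \<in> cl A I (dl A (Reach A I u) \<sigma>)"
    unfolding cl_def dl_def Reach_def using q0 vs'I by blast
next
  fix q assume "q \<in> cl A I (dl A (Reach A I u) \<sigma>)"
  then obtain p2 y p1 q0 x where "set y \<subseteq> I" "path A p2 y q" "p2 \<in> trans A p1 \<sigma>"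
    "q0 \<in> init A" "filter (\<lambda>a. a \<notin> I) x = u" "path A q0 x p1"
    unfolding cl_def dl_def Reach_def by blast
  then show "q \<in> Reach A I (u@[\<sigma>])"
  proof -
    have "filter (\<lambda>a. a \<notin> I) (x @ \<sigma> # y) = u @ [\<sigma>]"
      using assms \<open>set y \<subseteq> I\<close> \<open>filter (\<lambda>a. a \<notin> I) x = u\<close> by (auto simp: filter_empty_conv)
    moreover have "path A q0 (x @ \<sigma> # y) q" using \<open>path A q0 x p1\<close> \<open>p2 \<in> trans A p1 \<sigma>\<close> \<open>path A p2 y q\<close>
      by (auto simp: path_append)
    ultimately show ?thesis unfolding Reach_def using \<open>q0 \<in> init A\<close> by blast
  qed
qed


definition G :: "('a,'q) automaton \<Rightarrow> 'a set \<Rightarrow> 'q set" where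
  "G A I = {q. \<exists>t r. r 0 = q \<and> (\<forall>i. r (Suc i) \<in> trans A (r i) (t i)) \<and> range t \<subseteq> I
      \<and> (\<forall>b\<in>I. \<exists>\<^sub>\<infinity> i. t i = b) \<and> (\<exists>\<^sub>\<infinity> i. r i \<in> acc A)}"

definition cyc :: "'a set \<Rightarrow> 'a list" where "cyc I = (SOME cs. set cs = I \<and> distinct cs)"

lemma cyc: "finite I \<Longrightarrow> set (cyc I) = I \<and> distinct (cyc I)"
  unfolding cyc_def by (rule someI_ex) (rule finite_distinct_list)

type_synonym 'q st = "('q set + nat) option"

definition stepI :: "('a,'q) automaton \<Rightarrow> 'a set \<Rightarrow> 'q st \<Rightarrow> 'a \<Rightarrow> 'q st" where
 "stepI A I s \<sigma> = (case s of None \<Rightarrow> None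
   | Some (Inl S) \<Rightarrow> if \<sigma> \<notin> I then Some (Inl (cl A I (dl A S \<sigma>)))
        else if \<sigma> = cyc I ! 0 \<and> S \<inter> G A I \<noteq> {} then Some (Inr (1 mod length (cyc I))) else None
   | Some (Inr j) \<Rightarrow> if \<sigma> = cyc I ! j then Some (Inr (Suc j mod length (cyc I))) else None)"

definition St :: "('a,'q) automaton \<Rightarrow> 'a set \<Rightarrow> 'q st set" where
 "St A I = insert None (Some ` (Inl ` Pow (states A) \<union> Inr ` {..<length (cyc I)}))"

definition Prod :: "('a,'q) automaton \<Rightarrow> ('a, 'a set \<Rightarrow> 'q st) automaton" where
 "Prod A = Automaton (alph A) (PiE (Pow (alph A)) (St A))
    (\<lambda>g \<sigma>. {restrict (\<lambda>I. stepI A I (g I) \<sigma>) (Pow (alph A))})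
    {restrict (\<lambda>I. Some (Inl (cl A I (init A)))) (Pow (alph A))}
    {g \<in> PiE (Pow (alph A)) (St A). \<exists>I\<in>Pow (alph A). \<exists>j. g I = Some (Inr j)}"

lemma cl_sub: assumes wf: "well_formed A" and S: "S \<subseteq> states A" and I: "I \<subseteq> alph A" shows "cl A I S \<subseteq> states A"
proof
  fix q assume q: "q \<in> cl A I S"
  then obtain p y where "p \<in> S" "set y \<subseteq> I" "path A p y q" unfolding cl_def by blast
  then show "q \<in> states A" using path_closed[OF wf, of p y q] S I by blast
qed

lemma dl_sub: "well_formed A \<Longrightarrow> S \<subseteq> states A \<Longrightarrow> \<sigma> \<in> alph A \<Longrightarrow> dl A S \<sigma> \<subseteq> states A"
  unfolding dl_def well_formed_def by blast

lemma stepI_St: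
  assumes wf: "well_formed A" and I: "I \<subseteq> alph A" and s: "s \<in> St A I" and \<sigma>: "\<sigma> \<in> alph A"
  shows "stepI A I s \<sigma> \<in> St A I"
proof -
  have fI: "finite I" using wf I finite_subset unfolding well_formed_def by blast
  have k: "\<sigma> \<in> I \<Longrightarrow> length (cyc I) > 0" using cyc[OF fI] by (cases "cyc I") auto
  show ?thesis
  proof (cases s)
    case None then show ?thesis by (simp add: stepI_def St_def)
  next
    case (Some a)
    show ?thesis
    proof (cases a)
      case (Inl S)
      then have "S \<subseteq> states A" using s Some by (auto simp: St_def)
      then have "cl A I (dl A S \<sigma>) \<subseteq> states A" using cl_sub[OF wf dl_sub[OF wf _ \<sigma>] I] by blast
      moreover have "\<sigma> \<in> I \<Longrightarrow> 1 mod length (cyc I) < length (cyc I)" using k by (metis mod_less_divisor)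
      ultimately show ?thesis using Some Inl by (auto simp: stepI_def St_def)
    next
      case (Inr j)
      then have "j < length (cyc I)" using s Some by (auto simp: St_def)
      then have "Suc j mod length (cyc I) < length (cyc I)" by (metis mod_less_divisor not_less0 neq0_conv)
      then show ?thesis using Some Inr by (auto simp: stepI_def St_def)
    qed
  qed
qed

lemma Prod_wf: assumes wf: "well_formed A" shows "well_formed (Prod A)"
proof -
  have fS: "finite (alph A)" "finite (states A)" using wf by (auto simp: well_formed_def)
  have "finite (St A I)" for I using fS by (simp add: St_def)
  then have "finite (PiE (Pow (alph A)) (St A))" using fS by (intro finite_PiE) auto
  moreover have "cl A I (init A) \<subseteq> states A" if "I \<subseteq> alph A" for I
    using cl_sub[OF wf _ that] wf by (auto simp: well_formed_def)
  moreover have "restrict (\<lambda>I. stepI A I (g I) \<sigma>) (Pow (alph A)) \<in> PiE (Pow (alph A)) (St A)"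
    if "g \<in> PiE (Pow (alph A)) (St A)" "\<sigma> \<in> alph A" for g \<sigma>
    using that stepI_St[OF wf] by (auto simp: PiE_def Pi_def)
  ultimately show ?thesis using fS unfolding well_formed_def Prod_def by (auto simp: St_def)
qed

lemma Prod_det: "deterministic (Prod A)"
  by (simp add: deterministic_def Prod_def)

lemma Prod_run:
  assumes "is_run (Prod A) w r" "I \<in> Pow (alph A)"
  shows "r 0 I = Some (Inl (cl A I (init A)))" "r (Suc i) I = stepI A I (r i I) (w i)"
  using assms by (auto simp: is_run_def Prod_def)

context
  fixes A :: "('a,'q) automaton" and I and w and \<rho> :: "nat \<Rightarrow> 'q st"
  assumes r0: "\<rho> 0 = Some (Inl (cl A I (init A)))"
    and rS: "\<And>i. \<rho> (Suc i) = stepI A I (\<rho> i) (w i)"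
begin

lemma phase1: "(\<forall>j<i. w j \<notin> I) \<Longrightarrow> \<rho> i = Some (Inl (Reach A I (map w [0..<i])))"
proof (induct i)
  case 0 then show ?case using r0 by (simp add: Reach_Nil)
next
  case (Suc i)
  then show ?case using rS[of i] by (simp add: stepI_def Reach_snoc)
qed

lemma none_abs: "\<rho> i = None \<Longrightarrow> \<rho> (i + j) = None"
  by (induct j) (auto simp: rS stepI_def)


lemma accept_shape:
  assumes fin: "finite I" and inf: "\<exists>\<^sub>\<infinity> i. \<exists>j. \<rho> i = Some (Inr j)"
  shows "I \<noteq> {} \<and> (\<exists>n. (\<forall>i<n. w i \<notin> I) \<and> Reach A I (map w [0..<n]) \<inter> G A I \<noteq> {}
            \<and> (\<forall>j. w (n+j) = cyc I ! (j mod length (cyc I))))"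
proof -
  have nN: "\<rho> i \<noteq> None" for i
  proof
    assume "\<rho> i = None"
    then have N: "\<rho> (i + j) = None" for j using none_abs by blast
    obtain m j where "m > i" "\<rho> m = Some (Inr j)" using inf unfolding INFM_nat by blast
    then show False using N[of "m - i"] by simp
  qed
  have ex: "\<exists>n. w n \<in> I"
  proof (rule ccontr)
    assume "\<not> ?thesis"
    then have "\<rho> i = Some (Inl (Reach A I (map w [0..<i])))" for i using phase1 by blast
    moreover obtain i j where "\<rho> i = Some (Inr j)" using INFM_EX[OF inf] by blast
    ultimately show False by simp
  qed
  define n where "n = (LEAST n. w n \<in> I)"
  have wn: "w n \<in> I" unfolding n_def using ex by (rule LeastI_ex)
  have P: "\<forall>i<n. w i \<notin> I" unfolding n_def using not_less_Least by blast
  have rn: "\<rho> n = Some (Inl (Reach A I (map w [0..<n])))" using phase1 P by blast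
  have cI: "set (cyc I) = I" using cyc[OF fin] by blast
  then have k: "length (cyc I) > 0" using wn by (cases "cyc I") auto
  define k where "k = length (cyc I)"
  have st: "\<rho> (Suc n) = stepI A I (\<rho> n) (w n)" by (rule rS)
  with nN[of "Suc n"] rn wn have c1: "w n = cyc I ! 0" and c2: "Reach A I (map w [0..<n]) \<inter> G A I \<noteq> {}"
    and c3: "\<rho> (Suc n) = Some (Inr (1 mod k))"
    by (auto simp: stepI_def k_def split: if_splits)
  have "\<rho> (Suc n + j) = Some (Inr (Suc j mod k)) \<and> w (n + j) = cyc I ! (j mod k)" for j
  proof (induct j)
    case 0 then show ?case using c1 c3 by simp
  next
    case (Suc j)
    have "\<rho> (Suc n + Suc j) = stepI A I (\<rho> (Suc n + j)) (w (n + Suc j))" using rS[of "Suc n + j"] by simp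
    with Suc nN[of "Suc n + Suc j"] show ?case
      by (auto simp: stepI_def k_def mod_Suc_eq split: if_splits)
  qed
  then show ?thesis using P c2 wn unfolding k_def by blast
qed

lemma shape_accept:
  assumes fin: "finite I" and ne: "I \<noteq> {}" and P: "\<forall>i<n. w i \<notin> I"
    and RG: "Reach A I (map w [0..<n]) \<inter> G A I \<noteq> {}"
    and per: "\<forall>j. w (n+j) = cyc I ! (j mod length (cyc I))"
  shows "\<exists>\<^sub>\<infinity> i. \<exists>j. \<rho> i = Some (Inr j)"
proof -
  have rn: "\<rho> n = Some (Inl (Reach A I (map w [0..<n])))" using phase1 P by blast
  have cI: "set (cyc I) = I" using cyc[OF fin] by blast
  then have k: "length (cyc I) > 0" using ne by (cases "cyc I") auto
  define k where "k = length (cyc I)"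
  have wn: "w n = cyc I ! 0" using per[rule_format, of 0] by simp
  then have wnI: "w n \<in> I" using k cI by (metis nth_mem)
  have c3: "\<rho> (Suc n) = Some (Inr (1 mod k))"
    using rS[of n] rn wn wnI RG by (simp add: stepI_def k_def)
  have R: "\<rho> (Suc n + j) = Some (Inr (Suc j mod k))" for j
  proof (induct j)
    case 0 then show ?case using c3 by simp
  next
    case (Suc j)
    have "\<rho> (Suc n + Suc j) = stepI A I (\<rho> (Suc n + j)) (w (n + Suc j))" using rS[of "Suc n + j"] by simp
    moreover have "w (n + Suc j) = cyc I ! (Suc j mod k)" using per[rule_format, of "Suc j"] k_def by simp
    ultimately show ?case using Suc
      by (auto simp: stepI_def k_def mod_Suc_eq)
  qed
  show ?thesis unfolding INFM_nat
  proof
    fix m show "\<exists>i>m. \<exists>j. \<rho> i = Some (Inr j)" using R[of m] by (intro exI[of _ "Suc n + m"]) auto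
  qed
qed

end


lemma parikh_fin:
  assumes "\<forall>i\<ge>length l. v i \<noteq> \<sigma>" "\<forall>i<length l. v i = l!i"
  shows "parikh v \<sigma> = enat (length (filter (\<lambda>a. a = \<sigma>) l))"
proof -
  have e: "{i. v i = \<sigma>} = {i. i < length l \<and> l!i = \<sigma>}" using assms by (auto simp: not_less[symmetric])
  show ?thesis unfolding parikh_def e by (simp add: length_filter_conv_card)
qed

lemma parikh_inf: "\<exists>\<^sub>\<infinity>i. v i = \<sigma> \<Longrightarrow> parikh v \<sigma> = \<infinity>"
  by (simp add: parikh_def INFM_iff_infinite)

lemma periodic_inf:
  assumes fin: "finite I" and s: "\<sigma> \<in> I" and per: "\<forall>j. w (n+j) = cyc I ! (j mod length (cyc I))"
  shows "\<exists>\<^sub>\<infinity>i. w i = \<sigma>"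
proof -
  have "\<sigma> \<in> set (cyc I)" using cyc[OF fin] s by blast
  then obtain m where m: "m < length (cyc I)" "cyc I ! m = \<sigma>" by (auto simp: in_set_conv_nth)
  define k where "k = length (cyc I)"
  have "w (n + (m + l * k)) = \<sigma>" for l using per[rule_format, of "m + l * k"] m by (simp add: k_def)
  show ?thesis unfolding INFM_nat
  proof
    fix M
    have "k > 0" using m(1) unfolding k_def by linarith
    then have "Suc M * 1 \<le> Suc M * k" by (intro mult_le_mono2) simp
    then have "Suc M \<le> Suc M * k" by simp
    then have "n + (m + Suc M * k) > M" by linarith
    then show "\<exists>i>M. w i = \<sigma>" using \<open>\<And>l. w (n + (m + l * k)) = \<sigma>\<close> by blast
  qed
qed

lemma path_run:
  "path A q0 x q \<Longrightarrow> \<exists>r. r 0 = q0 \<and> r (length x) = q \<and> (\<forall>i<length x. r (Suc i) \<in> trans A (r i) (x!i))"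
proof (induct x arbitrary: q0)
  case Nil then show ?case by (intro exI[of _ "\<lambda>_. q0"]) simp
next
  case (Cons a x)
  then obtain p where p: "p \<in> trans A q0 a" "path A p x q" by auto
  then obtain r where r: "r 0 = p" "r (length x) = q" "\<forall>i<length x. r (Suc i) \<in> trans A (r i) (x!i)"
    using Cons.hyps by blast
  define r' where "r' i = (if i = 0 then q0 else r (i - 1))" for i
  have "\<forall>i<length (a#x). r' (Suc i) \<in> trans A (r' i) ((a#x)!i)"
  proof (intro allI impI)
    fix i assume "i < length (a#x)"
    then show "r' (Suc i) \<in> trans A (r' i) ((a#x)!i)"
      using r p by (cases i) (auto simp: r'_def)
  qed
  then show ?case using r by (intro exI[of _ r']) (auto simp: r'_def)
qed

lemma run_path:
  assumes "\<forall>i. r (Suc i) \<in> trans A (r i) (w i)"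
  shows "path A (r 0) (map w [0..<N]) (r N)"
proof (induct N)
  case 0 then show ?case by simp
next
  case (Suc N) then show ?case using assms by (auto simp: path_append)
qed

definition conc :: "'a list \<Rightarrow> (nat \<Rightarrow> 'a) \<Rightarrow> nat \<Rightarrow> 'a" where
  "conc x t i = (if i < length x then x!i else t (i - length x))"

lemma sound:
  assumes wf: "well_formed A" and w: "w \<in> omega_words (alph A)" and I: "I \<subseteq> alph A" and ne: "I \<noteq> {}"
    and P: "\<forall>i<n. w i \<notin> I" and RG: "Reach A I (map w [0..<n]) \<inter> G A I \<noteq> {}"
    and per: "\<forall>j. w (n+j) = cyc I ! (j mod length (cyc I))"
  shows "\<exists>w'\<in>lang A. parikh w' = parikh w"
proof -
  have fin: "finite I" using wf I finite_subset unfolding well_formed_def by blast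
  have cI: "set (cyc I) = I" using cyc[OF fin] by blast
  then have k: "length (cyc I) > 0" using ne by (cases "cyc I") auto
  define u where "u = map w [0..<n]"
  obtain q q0 x where q0: "q0 \<in> init A" and fx: "filter (\<lambda>a. a \<notin> I) x = u" and px: "path A q0 x q"
    and qG: "q \<in> G A I"
    using RG unfolding Reach_def u_def by blast
  obtain t r' where r'0: "r' 0 = q" and r'S: "\<forall>i. r' (Suc i) \<in> trans A (r' i) (t i)"
    and tI: "range t \<subseteq> I" and tinf: "\<forall>b\<in>I. \<exists>\<^sub>\<infinity> i. t i = b" and racc: "\<exists>\<^sub>\<infinity> i. r' i \<in> acc A"
    using qG unfolding G_def by blast
  obtain r where r0: "r 0 = q0" and rL: "r (length x) = q" and rS: "\<forall>i<length x. r (Suc i) \<in> trans A (r i) (x!i)"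
    using path_run[OF px] by blast
  define L where "L = length x"
  define w' where "w' = conc x t"
  define R where "R i = (if i \<le> L then r i else r' (i - L))" for i
  have run: "is_run A w' R" unfolding is_run_def
  proof (intro conjI allI)
    show "R 0 \<in> init A" using r0 q0 by (simp add: R_def)
    fix i
    show "R (Suc i) \<in> trans A (R i) (w' i)"
    proof (cases "i < L")
      case True then show ?thesis using rS by (auto simp: R_def w'_def conc_def L_def)
    next
      case False
      then have "R (Suc i) = r' (Suc (i - L))" "R i = r' (i - L)" "w' i = t (i - L)"
        using rL r'0 by (auto simp: R_def w'_def conc_def L_def Suc_diff_le)
      then show ?thesis using r'S by simp
    qed
  qed
  have RL: "R (L + i) = r' i" for i using rL r'0 by (auto simp: R_def L_def)
  have "\<exists>\<^sub>\<infinity>i. R (L + i) \<in> acc A" using racc by (simp add: RL)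
  then have acc: "accepting A R" unfolding accepting_def using INFM_shift[of "\<lambda>i. R i \<in> acc A" L] by simp
  have setx: "set x \<subseteq> alph A"
  proof
    fix a assume a: "a \<in> set x"
    show "a \<in> alph A"
    proof (cases "a \<in> I")
      case True then show ?thesis using I by blast
    next
      case False then have "a \<in> set u" using a fx[symmetric] by auto
      then show ?thesis using w unfolding u_def omega_words_def by auto
    qed
  qed
  have w'om: "w' \<in> omega_words (alph A)"
    unfolding omega_words_def w'_def conc_def using setx tI I by (auto intro: nth_mem)
  have "w' \<in> lang A" using w'om run acc unfolding lang_def by blast
  moreover have "parikh w' \<sigma> = parikh w \<sigma>" for \<sigma>
  proof (cases "\<sigma> \<in> I")
    case True
    have "\<exists>\<^sub>\<infinity>i. w' (L + i) = \<sigma>" using tinf True by (simp add: w'_def conc_def L_def)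
    then have "\<exists>\<^sub>\<infinity>i. w' i = \<sigma>" using INFM_shift[of "\<lambda>i. w' i = \<sigma>" L] by simp
    then show ?thesis using periodic_inf[OF fin True per] by (simp add: parikh_inf)
  next
    case False
    have "parikh w' \<sigma> = enat (length (filter (\<lambda>a. a = \<sigma>) x))"
      by (rule parikh_fin) (use tI False in \<open>auto simp: w'_def conc_def\<close>)
    moreover have "parikh w \<sigma> = enat (length (filter (\<lambda>a. a = \<sigma>) u))"
    proof (rule parikh_fin)
      show "\<forall>i\<ge>length u. w i \<noteq> \<sigma>"
      proof (intro allI impI)
        fix i assume "length u \<le> i"
        then have "w i = cyc I ! ((i - n) mod length (cyc I))" using per[rule_format, of "i - n"] by (simp add: u_def)
        then have "w i \<in> I" using k cI by (metis mod_less_divisor nth_mem)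
        then show "w i \<noteq> \<sigma>" using False by blast
      qed
      show "\<forall>i<length u. w i = u!i" by (simp add: u_def)
    qed
    moreover have "filter (\<lambda>a. a = \<sigma>) u = filter (\<lambda>a. a = \<sigma>) x"
      unfolding fx[symmetric] using False by (auto simp: filter_filter intro: filter_cong)
    ultimately show ?thesis by simp
  qed
  ultimately show ?thesis by blast
qed

lemma to_nat:
  fixes D :: "('a,'s) automaton"
  assumes wf: "well_formed D" and det: "deterministic D"
  shows "\<exists>D' :: ('a,nat) automaton. well_formed D' \<and> alph D' = alph D \<and> deterministic D' \<and> lang D' = lang D"
proof -
  let ?Q = "states D"
  have fin: "finite ?Q" using wf by (simp add: well_formed_def)
  then obtain f :: "'s \<Rightarrow> nat" where "bij_betw f ?Q {0..<card ?Q}"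
    using ex_bij_betw_finite_nat by blast
  then have inj: "inj_on f ?Q" by (simp add: bij_betw_def)
  define g where "g = inv_into ?Q f"
  have gf: "\<And>q. q \<in> ?Q \<Longrightarrow> g (f q) = q" unfolding g_def using inj by simp
  define D' where "D' = Automaton (alph D) (f ` ?Q) (\<lambda>n \<sigma>. f ` trans D (g n) \<sigma>) (f ` init D) (f ` acc D)"
  have iq: "init D \<subseteq> ?Q" and aq: "acc D \<subseteq> ?Q"
    and tq: "\<And>q \<sigma>. q \<in> ?Q \<Longrightarrow> \<sigma> \<in> alph D \<Longrightarrow> trans D q \<sigma> \<subseteq> ?Q"
    using wf by (auto simp: well_formed_def)
  have wf': "well_formed D'"
    using wf unfolding well_formed_def D'_def by (auto simp: gf) (metis gf image_iff subsetD)
  have det': "deterministic D'"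
    using det unfolding deterministic_def D'_def
    by (auto simp: gf card_image inj_on_subset[OF inj iq] intro!: card_image[THEN trans])
      (metis card_image gf inj inj_on_subset tq)
  have "lang D' = lang D"
  proof (intro set_eqI iffI)
    fix w assume "w \<in> lang D'"
    then obtain r where w: "w \<in> omega_words (alph D)" and r: "is_run D' w r" and a: "accepting D' r"
      by (auto simp: lang_def D'_def)
    have w': "w \<in> omega_words (alph D')" using w by (simp add: D'_def)
    have rin: "r i \<in> f ` ?Q" for i using run_in_states[OF wf' w' r] by (simp add: D'_def)
    have "is_run D w (g \<circ> r)"
      unfolding is_run_def
    proof (intro conjI allI)
      show "(g \<circ> r) 0 \<in> init D" using r iq gf by (auto simp: is_run_def D'_def)
      fix i
      have "w i \<in> alph D" using w by (auto simp: omega_words_def)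
      moreover have "r (Suc i) \<in> f ` trans D (g (r i)) (w i)" using r by (auto simp: is_run_def D'_def)
      moreover have "g (r i) \<in> ?Q" using rin[of i] gf by force
      ultimately show "(g \<circ> r) (Suc i) \<in> trans D ((g \<circ> r) i) (w i)" using tq gf by (auto, metis gf subsetD tq)
    qed
    moreover have "accepting D (g \<circ> r)"
      using a unfolding accepting_def D'_def
      by (auto elim!: INFM_mono) (metis aq gf subsetD)
    ultimately show "w \<in> lang D" using w by (auto simp: lang_def)
  next
    fix w assume "w \<in> lang D"
    then obtain r where w: "w \<in> omega_words (alph D)" and r: "is_run D w r" and a: "accepting D r"
      by (auto simp: lang_def)
    have rin: "r i \<in> ?Q" for i using run_in_states[OF wf w r] .
    have "is_run D' w (f \<circ> r)" using r rin gf by (auto simp: is_run_def D'_def)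
    moreover have "accepting D' (f \<circ> r)" using a by (auto simp: accepting_def D'_def elim!: INFM_mono)
    ultimately show "w \<in> lang D'" using w by (auto simp: lang_def D'_def)
  qed
  moreover have "alph D' = alph D" by (simp add: D'_def)
  ultimately show ?thesis using wf' det' by blast
qed


lemma complete:
  assumes wf: "well_formed A" and w'L: "w' \<in> lang A"
  shows "\<exists>w\<in>lang (Prod A). parikh w = parikh w'"
proof -
  let ?S = "alph A"
  have finS: "finite ?S" using wf by (simp add: well_formed_def)
  obtain r where w'om: "w' \<in> omega_words ?S" and run: "is_run A w' r" and racc: "accepting A r"
    using w'L unfolding lang_def by blast
  have w'S: "w' i \<in> ?S" for i using w'om by (auto simp: omega_words_def)
  define I where "I = {\<sigma>\<in>?S. \<exists>\<^sub>\<infinity> i. w' i = \<sigma>}"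
  have IS: "I \<subseteq> ?S" by (auto simp: I_def)
  have fin: "finite I" using finS IS finite_subset by blast
  define B where "B = (\<Union>\<sigma>\<in>?S - I. {i. w' i = \<sigma>})"
  have fB: "finite B" unfolding B_def using finS
    by (intro finite_UN_I) (auto simp: I_def INFM_iff_infinite)
  obtain N where "B \<subseteq> {..<N}" using finite_nat_bounded[OF fB] by blast
  then have N: "\<forall>i\<in>B. i < N" by auto
  have wI: "w' i \<in> I" if "i \<ge> N" for i
  proof (rule ccontr)
    assume "w' i \<notin> I"
    then have "i \<in> B" using w'S[of i] unfolding B_def by blast
    then show False using N that by force
  qed
  have ne: "I \<noteq> {}" using wI[of N] by blast
  have cI: "set (cyc I) = I" using cyc[OF fin] by blast
  then have k: "length (cyc I) > 0" using ne by (cases "cyc I") auto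
  define x where "x = map w' [0..<N]"
  define u where "u = filter (\<lambda>a. a \<notin> I) x"
  have rS: "\<forall>i. r (Suc i) \<in> trans A (r i) (w' i)" and r0: "r 0 \<in> init A" using run by (auto simp: is_run_def)
  have px: "path A (r 0) x (r N)" unfolding x_def by (rule run_path[OF rS])
  have "r N \<in> G A I" unfolding G_def
  proof (intro CollectI exI conjI)
    show "(\<lambda>i. r (N + i)) 0 = r N" by simp
    show "\<forall>i. (\<lambda>i. r (N + i)) (Suc i) \<in> trans A ((\<lambda>i. r (N + i)) i) ((\<lambda>i. w' (N + i)) i)"
      using rS by simp
    show "range (\<lambda>i. w' (N + i)) \<subseteq> I" using wI by auto
    show "\<forall>b\<in>I. \<exists>\<^sub>\<infinity>i. (\<lambda>i. w' (N + i)) i = b"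
      using INFM_shift[of "\<lambda>i. w' i = _" N] by (auto simp: I_def)
    show "\<exists>\<^sub>\<infinity>i. (\<lambda>i. r (N + i)) i \<in> acc A"
      using INFM_shift[of "\<lambda>i. r i \<in> acc A" N] racc by (simp add: accepting_def)
  qed
  then have RG: "Reach A I u \<inter> G A I \<noteq> {}"
    using px r0 unfolding Reach_def u_def by blast
  define n where "n = length u"
  define w where "w i = (if i < n then u!i else cyc I ! ((i - n) mod length (cyc I)))" for i
  have setu: "set u \<subseteq> ?S" "\<forall>a\<in>set u. a \<notin> I" using w'S by (auto simp: u_def x_def)
  have cycI: "cyc I ! j \<in> I" if "j < length (cyc I)" for j using cI that nth_mem by blast
  have wom: "w \<in> omega_words ?S"
    unfolding omega_words_def w_def n_def using setu cycI IS k
    by (auto intro: nth_mem mod_less_divisor)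
  have P: "\<forall>i<n. w i \<notin> I" using setu by (auto simp: w_def n_def)
  have mw: "map w [0..<n] = u" by (rule nth_equalityI) (simp_all add: w_def n_def)
  have per: "\<forall>j. w (n+j) = cyc I ! (j mod length (cyc I))" by (simp add: w_def)
  define R where "R = rec_nat (restrict (\<lambda>I. Some (Inl (cl A I (init A)))) (Pow ?S))
      (\<lambda>i g. restrict (\<lambda>J. stepI A J (g J) (w i)) (Pow ?S))"
  have Rrun: "is_run (Prod A) w R" by (simp add: is_run_def Prod_def R_def)
  have wfP: "well_formed (Prod A)" using Prod_wf[OF wf] .
  have womP: "w \<in> omega_words (alph (Prod A))" using wom by (simp add: Prod_def)
  have IP: "I \<in> Pow ?S" using IS by simp
  have "\<exists>\<^sub>\<infinity> i. \<exists>j. R i I = Some (Inr j)"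
    using shape_accept[of "\<lambda>i. R i I" A I w, OF Prod_run(1)[OF Rrun IP] Prod_run(2)[OF Rrun IP] fin ne P]
      RG mw per by simp
  then have "accepting (Prod A) R"
    unfolding accepting_def
    using run_in_states[OF wfP womP Rrun] IP
    by (elim INFM_mono) (auto simp: Prod_def)
  then have wL: "w \<in> lang (Prod A)" using womP Rrun unfolding lang_def by blast
  moreover have "parikh w \<sigma> = parikh w' \<sigma>" for \<sigma>
  proof (cases "\<sigma> \<in> I")
    case True
    then show ?thesis using periodic_inf[OF fin True per] by (simp add: parikh_inf I_def)
  next
    case False
    have "parikh w' \<sigma> = enat (length (filter (\<lambda>a. a = \<sigma>) x))"
      by (rule parikh_fin) (use wI False in \<open>auto simp: x_def\<close>)
    moreover have "parikh w \<sigma> = enat (length (filter (\<lambda>a. a = \<sigma>) u))"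
    proof (rule parikh_fin)
      show "\<forall>i\<ge>length u. w i \<noteq> \<sigma>"
        using cycI k False by (auto simp: w_def n_def)
      show "\<forall>i<length u. w i = u!i" by (simp add: w_def n_def)
    qed
    moreover have "filter (\<lambda>a. a = \<sigma>) u = filter (\<lambda>a. a = \<sigma>) x"
      unfolding u_def using False by (auto simp: filter_filter intro: filter_cong)
    ultimately show ?thesis by simp
  qed
  ultimately show ?thesis by blast
qed

lemma sound_Prod:
  assumes wf: "well_formed A" and wL: "w \<in> lang (Prod A)"
  shows "\<exists>w'\<in>lang A. parikh w' = parikh w"
proof -
  let ?S = "alph A"
  have finS: "finite ?S" using wf by (simp add: well_formed_def)
  obtain r where wom: "w \<in> omega_words ?S" and run: "is_run (Prod A) w r" and racc: "accepting (Prod A) r"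
    using wL unfolding lang_def by (auto simp: Prod_def)
  have "\<exists>\<^sub>\<infinity>i. \<exists>J\<in>Pow ?S. \<exists>j. r i J = Some (Inr j)"
    using racc unfolding accepting_def by (elim INFM_mono) (auto simp: Prod_def)
  then have "\<exists>J\<in>Pow ?S. \<exists>\<^sub>\<infinity>i. \<exists>j. r i J = Some (Inr j)"
    using INFM_finite_Bex_distrib[of "Pow ?S" "\<lambda>J i. \<exists>j. r i J = Some (Inr j)"] finS by simp
  then obtain J where J: "J \<in> Pow ?S" and inf: "\<exists>\<^sub>\<infinity>i. \<exists>j. r i J = Some (Inr j)"
    by blast
  have fin: "finite J" using J finS finite_subset by blast
  have AS: "J \<noteq> {} \<and> (\<exists>n. (\<forall>i<n. w i \<notin> J) \<and> Reach A J (map w [0..<n]) \<inter> G A J \<noteq> {}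
            \<and> (\<forall>j. w (n+j) = cyc J ! (j mod length (cyc J))))"
    by (rule accept_shape[of "\<lambda>i. r i J" A J w, OF Prod_run(1)[OF run J] Prod_run(2)[OF run J] fin inf])
  then obtain n where ne: "J \<noteq> {}" and P: "\<forall>i<n. w i \<notin> J" and RG: "Reach A J (map w [0..<n]) \<inter> G A J \<noteq> {}"
    and per: "\<forall>j. w (n+j) = cyc J ! (j mod length (cyc J))" by blast
  have JS: "J \<subseteq> ?S" using J by simp
  show ?thesis by (rule sound[OF wf wom JS ne P RG per])
qed

theorem proposition3:
  fixes A :: "('a, 'q) automaton"
  assumes "well_formed A"
  shows "\<exists>D :: ('a, nat) automaton. well_formed D \<and> alph D = alph A \<and> deterministic D
           \<and> jumping_lang A = jumping_lang D"
proof -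
  obtain D :: "('a, nat) automaton" where D: "well_formed D" "alph D = alph (Prod A)" "deterministic D"
    "lang D = lang (Prod A)"
    using to_nat[OF Prod_wf[OF assms] Prod_det] by blast
  have aP: "alph (Prod A) = alph A" by (simp add: Prod_def)
  have "jumping_lang A = jumping_lang D"
  proof (intro set_eqI iffI)
    fix w assume "w \<in> jumping_lang A"
    then obtain w' where "w \<in> omega_words (alph A)" "parikh w' = parikh w" "w' \<in> lang A"
      unfolding jumping_lang_def by blast
    moreover obtain w'' where "w'' \<in> lang (Prod A)" "parikh w'' = parikh w'"
      using complete[OF assms \<open>w' \<in> lang A\<close>] by blast
    ultimately show "w \<in> jumping_lang D" unfolding jumping_lang_def using D aP by auto
  next
    fix w assume "w \<in> jumping_lang D"
    then obtain w' where "w \<in> omega_words (alph A)" "parikh w' = parikh w" "w' \<in> lang (Prod A)"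
      unfolding jumping_lang_def using D aP by auto
    moreover obtain w'' where "w'' \<in> lang A" "parikh w'' = parikh w'"
      using sound_Prod[OF assms \<open>w' \<in> lang (Prod A)\<close>] by blast
    ultimately show "w \<in> jumping_lang A" unfolding jumping_lang_def by auto
  qed
  then show ?thesis using D aP by auto
qed

end
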